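(* Let $D$ be a series-parallel digraph with a fixed binary decomposition tree, and let $\boldsymbol{P}^*$ be an optimal path profile for \textsc{Min-Max Disjoint Paths} on $D$ with $k$ paths. Let $\ast\in\{\circ,\parallel\}$ and let $D'=D^{(1)}\ast D^{(2)}\sqsubseteq D$, where $D^{(1)},D^{(2)}$ are the graphs of the two children of the tree vertex of $D'$. If $\boldsymbol{Q}$ is a path profile in $D^{(1)}$ and $\boldsymbol{R}$ is a path profile in $D^{(2)}$ that are both consistent with $\boldsymbol{P}^*$ and balanced (in $D^{(1)}$, resp. $D^{(2)}$), then their greedy composition $\boldsymbol{P}=\boldsymbol{Q}\ast\boldsymbol{R}$ is a path profile in $D'$ that is consistent with $\boldsymbol{P}^*$ and balanced in $D'$.
   Context: A series-parallel digraph is a single arc, a series composition $D'\circ D''$ (sink of $D'$ identified with source of $D''$) or a parallel composition $D'\parallel D''$ (sources identified, sinks identified) of series-parallel digraphs; a binary decomposition tree has leaves = arcs and internal vertices labeled $S$/$P$ representing series/parallel composition of their children's graphs. $D'\sqsubseteq D$ denotes the subgraph represented by some vertex of the fixed tree, with source $s'$ and sink $t'$. \textsc{Min-Max Disjoint Paths} on $D$ with travel times $\tau\ge0$: find $k$ pairwise arc-disjoint $s$-$t$-paths minimizing the maximum length. A path profile in $D'$ is a tuple of pairwise arc-disjoint $s'$-$t'$-paths in $D'$; for an $s$-$t$-path $P$ of $D$ using an arc of $D'$, $P\cap A(D')$ is an $s'$-$t'$-path. Notation: $\tau(P,D')=\sum_{a\in P\cap A(D')}\tau_a$, $C_{\max}(\boldsymbol{P},D')=\max_{P\in\boldsymbol{P}}\tau(P,D')$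 (with $0$ for an empty profile), $\theta(\boldsymbol{P},D')=\sum_{P\in\boldsymbol{P}}\tau(P,D')$. A profile $\boldsymbol{P}$ is consistent with $\boldsymbol{P}^*$ in $D'$ if $\boldsymbol{P}$ and $\boldsymbol{P}^*$ use the same number of paths in $D'$ and $\theta(\boldsymbol{P},D')\le\theta(\boldsymbol{P}^*,D')$. If $k'$ paths of $\boldsymbol{P}$ traverse $D'$ with lengths (in $D'$) $p_1\ge\dots\ge p_{k'}$, then $\boldsymbol{P}$ is balanced in $D'$ if $\frac1i\sum_{j=1}^ip_j-p_{i+1}\le C_{\max}(\boldsymbol{P}^*,D')$ for all $i\in[k'-1]$. Greedy composition: for series composition with $\boldsymbol{Q},\boldsymbol{R}$ having the same number of paths, concatenate the longest path of $\boldsymbol{Q}$ with the shortest of $\boldsymbol{R}$, the second-longest with the second-shortest, and so on (ties broken arbitrarily); for parallel composition, take the union of the paths of $\boldsymbol{Q}$ and $\boldsymbol{R}$. *)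

theory Defs
  imports Complex_Main "HOL-Library.Multiset"
begin

text \<open>The digraph is represented through its decomposition tree: the source and sink
  of each subgraph are implicit in the structure.\<close>

datatype sptype = S | P

datatype 'a sptree = Arc 'a | Node sptype "'a sptree" "'a sptree"

fun arcs :: "'a sptree \<Rightarrow> 'a list" where
  "arcs (Arc a) = [a]"
| "arcs (Node c T1 T2) = arcs T1 @ arcs T2"

definition wf_tree :: "'a sptree \<Rightarrow> bool" where
  "wf_tree T \<longleftrightarrow> distinct (arcs T)"

text \<open>Subgraphs represented by vertices of the tree (D' \<sqsubseteq> D).\<close>
inductive subtree :: "'a sptree \<Rightarrow> 'a sptree \<Rightarrow> bool" where
  refl: "subtree T T"
| left: "subtree T' T1 \<Longrightarrow> subtree T' (Node c T1 T2)"
| right: "subtree T' T2 \<Longrightarrow> subtree T' (Node c T1 T2)"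

text \<open>Source-sink paths of the graph represented by a tree, as lists of arcs
  in traversal order.\<close>
inductive stpath :: "'a sptree \<Rightarrow> 'a list \<Rightarrow> bool" where
  arc: "stpath (Arc a) [a]"
| ser: "stpath T1 p \<Longrightarrow> stpath T2 q \<Longrightarrow> stpath (Node S T1 T2) (p @ q)"
| par1: "stpath T1 p \<Longrightarrow> stpath (Node P T1 T2) p"
| par2: "stpath T2 p \<Longrightarrow> stpath (Node P T1 T2) p"

definition path_profile :: "'a sptree \<Rightarrow> 'a list list \<Rightarrow> bool" where
  "path_profile T Ps \<longleftrightarrow> (\<forall>p \<in> set Ps. stpath T p) \<and>
     (\<forall>i < length Ps. \<forall>j < length Ps. i \<noteq> j \<longrightarrow> set (Ps ! i) \<inter> set (Ps ! j) = {})"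

definition plen :: "('a \<Rightarrow> real) \<Rightarrow> 'a list \<Rightarrow> 'a sptree \<Rightarrow> real" where
  "plen \<tau> p T = sum_list (map \<tau> (filter (\<lambda>a. a \<in> set (arcs T)) p))"

definition Cmax :: "('a \<Rightarrow> real) \<Rightarrow> 'a list list \<Rightarrow> 'a sptree \<Rightarrow> real" where
  "Cmax \<tau> Ps T = Max (insert 0 (set (map (\<lambda>p. plen \<tau> p T) Ps)))"

definition theta :: "('a \<Rightarrow> real) \<Rightarrow> 'a list list \<Rightarrow> 'a sptree \<Rightarrow> real" where
  "theta \<tau> Ps T = sum_list (map (\<lambda>p. plen \<tau> p T) Ps)"

definition npaths :: "'a list list \<Rightarrow> 'a sptree \<Rightarrow> nat" where
  "npaths Ps T = length (filter (\<lambda>p. set p \<inter> set (arcs T) \<noteq> {}) Ps)"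

definition optimal_profile :: "('a \<Rightarrow> real) \<Rightarrow> 'a sptree \<Rightarrow> nat \<Rightarrow> 'a list list \<Rightarrow> bool" where
  "optimal_profile \<tau> D k Ps \<longleftrightarrow> path_profile D Ps \<and> length Ps = k \<and>
     (\<forall>Qs. path_profile D Qs \<and> length Qs = k \<longrightarrow> Cmax \<tau> Ps D \<le> Cmax \<tau> Qs D)"

definition consistent :: "('a \<Rightarrow> real) \<Rightarrow> 'a list list \<Rightarrow> 'a list list \<Rightarrow> 'a sptree \<Rightarrow> bool" where
  "consistent \<tau> Ps Pstar T \<longleftrightarrow> npaths Ps T = npaths Pstar T \<and> theta \<tau> Ps T \<le> theta \<tau> Pstar T"

text \<open>The lengths of the paths traversing D' sorted non-increasingly
  are ps!0 \<ge> ps!1 \<ge> ...; the condition for i \<in> [k'-1] reads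
  (1/i) * (ps!0 + ... + ps!(i-1)) - ps!i \<le> C_max(Pstar, D').\<close>
definition balanced :: "('a \<Rightarrow> real) \<Rightarrow> 'a list list \<Rightarrow> 'a list list \<Rightarrow> 'a sptree \<Rightarrow> bool" where
  "balanced \<tau> Ps Pstar T \<longleftrightarrow>
     (let ps = rev (sort (map (\<lambda>p. plen \<tau> p T) (filter (\<lambda>p. set p \<inter> set (arcs T) \<noteq> {}) Ps)))
      in \<forall>i. 1 \<le> i \<and> i < length ps \<longrightarrow>
           (\<Sum>j<i. ps ! j) / real i - ps ! i \<le> Cmax \<tau> Pstar T)"

text \<open>Greedy composition (as a relation, since ties are broken arbitrarily).\<close>
definition greedy_comp :: "('a \<Rightarrow> real) \<Rightarrow> sptype \<Rightarrow> 'a sptree \<Rightarrow> 'a sptree \<Rightarrow>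
    'a list list \<Rightarrow> 'a list list \<Rightarrow> 'a list list \<Rightarrow> bool" where
  "greedy_comp \<tau> c T1 T2 Q R Ps \<longleftrightarrow>
     (if c = S then
        length Q = length R \<and>
        (\<exists>qs rs. mset qs = mset Q \<and> mset rs = mset R \<and>
           sorted_wrt (\<lambda>p q. plen \<tau> p T1 \<ge> plen \<tau> q T1) qs \<and>
           sorted_wrt (\<lambda>p q. plen \<tau> p T2 \<le> plen \<tau> q T2) rs \<and>
           Ps = map (\<lambda>(p, q). p @ q) (zip qs rs))
      else Ps = Q @ R)"

end

theory Submission
  imports Defs
begin


lemma stpath_nonempty: "stpath T p \<Longrightarrow> p \<noteq> []"
  by (induction rule: stpath.induct) auto

lemma stpath_subset: "stpath T p \<Longrightarrow> set p \<subseteq> set (arcs T)"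
  by (induction rule: stpath.induct) auto

lemma subtree_arcs: "subtree T' T \<Longrightarrow> \<exists>xs ys. arcs T = xs @ arcs T' @ ys"
proof (induction rule: subtree.induct)
  case (refl T) then show ?case by (metis append.left_neutral append.right_neutral)
next
  case (left T' T1 c T2) then show ?case by (metis append.assoc arcs.simps(2))
next
  case (right T' T2 c T1) then show ?case by (metis append.assoc arcs.simps(2))
qed

lemma subtree_distinct: "subtree T' T \<Longrightarrow> distinct (arcs T) \<Longrightarrow> distinct (arcs T')"
  using subtree_arcs by fastforce

lemma subtree_subset: "subtree T' T \<Longrightarrow> set (arcs T') \<subseteq> set (arcs T)"
  using subtree_arcs by fastforce

lemma restrict_path:
  assumes "subtree T' D" "distinct (arcs D)" "stpath D p"
  shows "filter (\<lambda>a. a \<in> set (arcs T')) p = [] \<or> stpath T' (filter (\<lambda>a. a \<in> set (arcs T')) p)"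
  using assms
proof (induction arbitrary: p rule: subtree.induct)
  case (refl T)
  then have "filter (\<lambda>a. a \<in> set (arcs T)) p = p" using stpath_subset[of T p]
    by (simp add: subset_code(1))
  then show ?case using refl by simp
next
  case (left T' T1 c T2)
  have d1: "distinct (arcs T1)" and dis: "set (arcs T1) \<inter> set (arcs T2) = {}" using left.prems by auto
  have sub: "set (arcs T') \<subseteq> set (arcs T1)" using left.hyps subtree_subset by blast
  from left.prems(2) show ?case
  proof (cases rule: stpath.cases)
    case (ser p1 p2)
    have "filter (\<lambda>a. a \<in> set (arcs T')) p2 = []"
      using stpath_subset[of T1 p1] stpath_subset[of T2 p2] ser sub dis by (auto simp: filter_empty_conv)
    then show ?thesis using left.IH[OF d1 ser(3)] ser(2) by simp
  next
    case par1 then show ?thesis using left.IH[OF d1] by simp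
  next
    case par2
    have "filter (\<lambda>a. a \<in> set (arcs T')) p = []"
      using stpath_subset[OF par2(2)] sub dis by (auto simp: filter_empty_conv)
    then show ?thesis by simp
  qed
next
  case (right T' T2 c T1)
  have d2: "distinct (arcs T2)" and dis: "set (arcs T1) \<inter> set (arcs T2) = {}" using right.prems by auto
  have sub: "set (arcs T') \<subseteq> set (arcs T2)" using right.hyps subtree_subset by blast
  from right.prems(2) show ?case
  proof (cases rule: stpath.cases)
    case (ser p1 p2)
    have "filter (\<lambda>a. a \<in> set (arcs T')) p1 = []"
      using stpath_subset[of T1 p1] stpath_subset[of T2 p2] ser sub dis by (auto simp: filter_empty_conv)
    then show ?thesis using right.IH[OF d2 ser(4)] ser(2) by simp
  next
    case par2 then show ?thesis using right.IH[OF d2] by simp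
  next
    case par1
    have "filter (\<lambda>a. a \<in> set (arcs T')) p = []"
      using stpath_subset[OF par1(2)] sub dis by (auto simp: filter_empty_conv)
    then show ?thesis by simp
  qed
qed

lemma plen_split:
  assumes "set (arcs T1) \<inter> set (arcs T2) = {}"
  shows "plen \<tau> p (Node c T1 T2) = plen \<tau> p T1 + plen \<tau> p T2"
  using assms by (induction p) (auto simp: plen_def)

lemma plen_zero: "set p \<inter> set (arcs T) = {} \<Longrightarrow> plen \<tau> p T = 0"
  unfolding plen_def by (subst filter_False) auto

lemma plen_full: "set p \<subseteq> set (arcs T) \<Longrightarrow> plen \<tau> p T = sum_list (map \<tau> p)"
  unfolding plen_def by (subst filter_True) auto

lemma plen_append: "plen \<tau> (p @ q) T = plen \<tau> p T + plen \<tau> q T"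
  by (simp add: plen_def)

lemma plen_nonneg: "\<forall>a. \<tau> a \<ge> 0 \<Longrightarrow> plen \<tau> p T \<ge> 0"
  unfolding plen_def by (rule sum_list_nonneg) auto

lemma Cmax_nonneg: "Cmax \<tau> Ps T \<ge> 0"
  unfolding Cmax_def by (rule Max_ge) auto

lemma Cmax_ge: "p \<in> set Ps \<Longrightarrow> plen \<tau> p T \<le> Cmax \<tau> Ps T"
  unfolding Cmax_def by (rule Max_ge) auto

lemma Cmax_mono:
  assumes "\<And>p. p \<in> set Ps \<Longrightarrow> plen \<tau> p T1 \<le> plen \<tau> p T"
  shows "Cmax \<tau> Ps T1 \<le> Cmax \<tau> Ps T"
proof -
  have "\<forall>x\<in>insert 0 (set (map (\<lambda>p. plen \<tau> p T1) Ps)). x \<le> Cmax \<tau> Ps T"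
  proof
    fix x assume "x \<in> insert 0 (set (map (\<lambda>p. plen \<tau> p T1) Ps))"
    then consider "x = 0" | p where "p \<in> set Ps" "x = plen \<tau> p T1" by auto
    then show "x \<le> Cmax \<tau> Ps T"
    proof cases
      case 1 then show ?thesis using Cmax_nonneg by simp
    next
      case 2 then show ?thesis using assms[of p] Cmax_ge[of p Ps \<tau> T] by simp
    qed
  qed
  then show ?thesis unfolding Cmax_def[of \<tau> Ps T1] by (subst Max_le_iff) auto
qed

lemma profile_distinct:
  assumes "path_profile T Q" shows "distinct Q"
proof -
  have "\<forall>i<length Q. \<forall>j<length Q. Q!i = Q!j \<longrightarrow> i = j"
  proof (intro allI impI)
    fix i j assume "i < length Q" "j < length Q" "Q!i = Q!j"
    moreover have "Q!i \<noteq> []" using assms \<open>i < length Q\<close> stpath_nonempty unfolding path_profile_def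
      by (metis nth_mem)
    ultimately show "i = j"
    proof (cases "i = j")
      case False
      then have "set (Q!i) \<inter> set (Q!j) = {}" using assms \<open>i < length Q\<close> \<open>j < length Q\<close>
        unfolding path_profile_def by blast
      then show ?thesis using \<open>Q!i = Q!j\<close> \<open>Q!i \<noteq> []\<close> by simp
    qed
  qed
  then show ?thesis by (metis distinct_conv_nth)
qed

lemma profile_disj:
  assumes "path_profile T Q" "p \<in> set Q" "p' \<in> set Q" "p \<noteq> p'"
  shows "set p \<inter> set p' = {}"
  using assms unfolding path_profile_def by (metis in_set_conv_nth)

lemma profile_intro:
  assumes "\<forall>p\<in>set Q. stpath T p" "distinct Q"
    "\<And>p p'. p \<in> set Q \<Longrightarrow> p' \<in> set Q \<Longrightarrow> p \<noteq> p' \<Longrightarrow> set p \<inter> set p' = {}"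
  shows "path_profile T Q"
  using assms unfolding path_profile_def by (metis nth_eq_iff_index_eq nth_mem)



lemma sum_split3:
  fixes f :: "nat \<Rightarrow> real"
  assumes "q < t"
  shows "sum f {..<t} = f q + (sum f {..<q} + sum f {q<..<t})"
proof -
  have split: "{..<t} = insert q ({..<q} \<union> {q<..<t})" using assms by auto
  have u: "sum f ({..<q} \<union> {q<..<t}) = sum f {..<q} + sum f {q<..<t}"
    by (rule sum.union_disjoint) auto
  show ?thesis unfolding split by (subst sum.insert) (auto simp: u)
qed

lemma block:
  fixes a :: "nat \<Rightarrow> real"
  assumes mono: "\<And>i j. i \<le> j \<Longrightarrow> j \<le> t \<Longrightarrow> a j \<le> a i"
    and bal: "(\<Sum>j<t. a j - a t) \<le> real t * C" and qt: "q < t"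
  shows "(\<Sum>j\<in>{q<..<t}. a j - a t) \<le> real (t - Suc q) * C"
proof -
  define d where "d = a q - a t"
  define k where "k = t - Suc q"
  define sB where "sB = (\<Sum>j\<in>{q<..<t}. a j - a t)"
  define sL where "sL = (\<Sum>j<Suc q. a j - a t)"
  have "sB \<le> real (card {q<..<t}) * d" unfolding sB_def d_def
    by (rule sum_bounded_above) (use mono qt in auto)
  then have hB: "sB \<le> real k * d" by (simp add: k_def)
  have "real (card {..<Suc q}) * d \<le> sL" unfolding sL_def d_def
    by (rule sum_bounded_below) (use mono qt in auto)
  then have hL: "real (Suc q) * d \<le> sL" by simp
  have split: "{..<t} = {..<Suc q} \<union> {q<..<t}" using qt by auto
  have "(\<Sum>j<t. a j - a t) = sL + sB" unfolding sL_def sB_def split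
    by (rule sum.union_disjoint) auto
  with bal have hs: "sL + sB \<le> real t * C" by simp
  have tk: "real t = real k + real (Suc q)" using qt by (simp add: k_def)
  have k0: "real k \<ge> 0" by simp
  have h1: "real (Suc q) * sB \<le> real (Suc q) * (real k * d)"
    using hB by (intro mult_left_mono) auto
  have h2: "real k * (real (Suc q) * d) \<le> real k * sL"
    using hL k0 by (intro mult_left_mono) auto
  have h3: "real k * (sL + sB) \<le> real k * (real t * C)"
    using hs k0 by (intro mult_left_mono) auto
  have "real t * sB \<le> real t * (real k * C)"
  proof -
    have "real t * sB = real k * sB + real (Suc q) * sB" using tk by (simp add: algebra_simps)
    also have "\<dots> \<le> real k * sB + real k * sL" using h1 h2 by (simp add: algebra_simps)
    also have "\<dots> = real k * (sL + sB)" by (simp add: algebra_simps)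
    also have "\<dots> \<le> real t * (real k * C)" using h3 by (simp add: algebra_simps)
    finally show ?thesis .
  qed
  moreover have "real t > 0" using qt by simp
  ultimately have "sB \<le> real k * C" by simp
  then show ?thesis by (simp add: sB_def k_def)
qed

lemma ulem:
  fixes a b :: "nat \<Rightarrow> real"
  assumes "\<And>i j. i \<le> j \<Longrightarrow> j \<le> t \<Longrightarrow> a j \<le> a i"
    "\<And>i j. i \<le> j \<Longrightarrow> j \<le> t \<Longrightarrow> b i \<le> b j"
    "\<And>i. 1 \<le> i \<Longrightarrow> i \<le> t \<Longrightarrow> (\<Sum>j<i. a j - a i) \<le> real i * C"
  shows "(\<Sum>j<t. if a t + b t < a j + b j then a j + b j - (a t + b t) - C else 0) \<le> 0"
  using assms
proof (induction t arbitrary: b rule: less_induct)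
  case (less t)
  show ?case
  proof (cases "\<forall>j<t. a t + b t < a j + b j")
    case True
    show ?thesis
    proof (cases "t = 0")
      case True then show ?thesis by simp
    next
      case False
      have "(\<Sum>j<t. if a t + b t < a j + b j then a j + b j - (a t + b t) - C else 0)
          = (\<Sum>j<t. a j + b j - (a t + b t) - C)" using True by (intro sum.cong) auto
      also have "\<dots> \<le> (\<Sum>j<t. (a j - a t) - C)"
        by (rule sum_mono) (use less.prems(2) in force)
      also have "\<dots> = (\<Sum>j<t. a j - a t) - real t * C" by (simp add: sum_subtractf)
      also have "\<dots> \<le> 0" using less.prems(3)[of t] False by simp
      finally show ?thesis .
    qed
  next
    case False
    define Sq where "Sq = {j. j < t \<and> \<not> a t + b t < a j + b j}"
    define q where "q = Max Sq"
    have fin: "finite Sq" unfolding Sq_def by auto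
    have ne: "Sq \<noteq> {}" using False unfolding Sq_def by auto
    have "q \<in> Sq" unfolding q_def using fin ne by (rule Max_in)
    then have qt: "q < t" and cq: "a q + b q \<le> a t + b t" unfolding Sq_def by auto
    have above: "a t + b t < a j + b j" if "q < j" "j < t" for j
    proof (rule ccontr)
      assume "\<not> ?thesis"
      then have "j \<in> Sq" using that unfolding Sq_def by auto
      then have "j \<le> q" unfolding q_def using fin by (simp add: Max_ge)
      then show False using that by simp
    qed
    define b' where "b' = b(q := b t + a t - a q)"
    have IH: "(\<Sum>j<q. if a q + b' q < a j + b' j then a j + b' j - (a q + b' q) - C else 0) \<le> 0"
    proof (rule less.IH[OF qt])
      show "a j \<le> a i" if "i \<le> j" "j \<le> q" for i j using that qt less.prems(1) by simp
      show "b' i \<le> b' j" if "i \<le> j" "j \<le> q" for i j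
      proof (cases "j = q")
        case True
        show ?thesis
        proof (cases "i = q")
          case True then show ?thesis using \<open>j = q\<close> by simp
        next
          case False
          then have "b i \<le> b q" using that less.prems(2) qt by simp
          then show ?thesis using False \<open>j = q\<close> cq unfolding b'_def by simp
        qed
      next
        case False
        then show ?thesis using that less.prems(2) qt unfolding b'_def by simp
      qed
      show "(\<Sum>j<i. a j - a i) \<le> real i * C" if "1 \<le> i" "i \<le> q" for i
        using that qt less.prems(3) by simp
    qed
    have IH': "(\<Sum>j<q. if a t + b t < a j + b j then a j + b j - (a t + b t) - C else 0) \<le> 0"
    proof -
      have "(\<Sum>j<q. if a t + b t < a j + b j then a j + b j - (a t + b t) - C else 0)
          = (\<Sum>j<q. if a q + b' q < a j + b' j then a j + b' j - (a q + b' q) - C else 0)"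
        by (intro sum.cong) (auto simp: b'_def)
      then show ?thesis using IH by simp
    qed
    have blk: "(\<Sum>j\<in>{q<..<t}. a j - a t) \<le> real (t - Suc q) * C"
      by (rule block[OF _ less.prems(3)[of t] qt]) (use less.prems(1) qt in auto)
    have blk': "(\<Sum>j\<in>{q<..<t}. if a t + b t < a j + b j then a j + b j - (a t + b t) - C else 0) \<le> 0"
    proof -
      have "(\<Sum>j\<in>{q<..<t}. if a t + b t < a j + b j then a j + b j - (a t + b t) - C else 0)
          = (\<Sum>j\<in>{q<..<t}. a j + b j - (a t + b t) - C)" using above by (intro sum.cong) auto
      also have "\<dots> \<le> (\<Sum>j\<in>{q<..<t}. (a j - a t) - C)"
        by (rule sum_mono) (use less.prems(2) in force)
      also have "\<dots> = (\<Sum>j\<in>{q<..<t}. a j - a t) - real (t - Suc q) * C" by (simp add: sum_subtractf)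
      also have "\<dots> \<le> 0" using blk by simp
      finally show ?thesis .
    qed
    have split: "{..<t} = insert q ({..<q} \<union> {q<..<t})" using qt by auto
    have "(\<Sum>j<t. if a t + b t < a j + b j then a j + b j - (a t + b t) - C else 0)
        = (if a t + b t < a q + b q then a q + b q - (a t + b t) - C else 0)
          + ((\<Sum>j<q. if a t + b t < a j + b j then a j + b j - (a t + b t) - C else 0)
          + (\<Sum>j\<in>{q<..<t}. if a t + b t < a j + b j then a j + b j - (a t + b t) - C else 0))"
      by (rule sum_split3[OF qt])
    then show ?thesis using IH' blk' cq by simp
  qed
qed

lemma vlem:
  fixes a b :: "nat \<Rightarrow> real"
  assumes "\<And>i j. i \<le> j \<Longrightarrow> j < n \<Longrightarrow> a j \<le> a i"
    "\<And>i j. i \<le> j \<Longrightarrow> j < n \<Longrightarrow> b i \<le> b j"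
    "\<And>i. 1 \<le> i \<Longrightarrow> i < n \<Longrightarrow> (\<Sum>j<i. b (n-1-j) - b (n-1-i)) \<le> real i * C"
    "t < n"
  shows "(\<Sum>j\<in>{t<..<n}. if a t + b t < a j + b j then a j + b j - (a t + b t) - C else 0) \<le> 0"
proof -
  have U: "(\<Sum>j<n-1-t. if b (n-1-(n-1-t)) + a (n-1-(n-1-t)) < b (n-1-j) + a (n-1-j)
       then b (n-1-j) + a (n-1-j) - (b (n-1-(n-1-t)) + a (n-1-(n-1-t))) - C else 0) \<le> 0"
    by (rule ulem[where a="\<lambda>j. b (n-1-j)" and b="\<lambda>j. a (n-1-j)" and t="n-1-t"])
       (use assms in auto)
  have e: "n-1-(n-1-t) = t" using assms(4) by simp
  have "(\<Sum>j\<in>{t<..<n}. if a t + b t < a j + b j then a j + b j - (a t + b t) - C else 0)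
      = (\<Sum>j<n-1-t. if b t + a t < b (n-1-j) + a (n-1-j)
       then b (n-1-j) + a (n-1-j) - (b t + a t) - C else 0)"
    by (rule sum.reindex_bij_witness[of _ "\<lambda>j. n-1-j" "\<lambda>j. n-1-j"]) (auto simp: algebra_simps)
  then show ?thesis using U unfolding e by simp
qed

lemma series_exc:
  fixes a b :: "nat \<Rightarrow> real"
  assumes "\<And>i j. i \<le> j \<Longrightarrow> j < n \<Longrightarrow> a j \<le> a i"
    "\<And>i j. i \<le> j \<Longrightarrow> j < n \<Longrightarrow> b i \<le> b j"
    "\<And>i. 1 \<le> i \<Longrightarrow> i < n \<Longrightarrow> (\<Sum>j<i. a j - a i) \<le> real i * C"
    "\<And>i. 1 \<le> i \<Longrightarrow> i < n \<Longrightarrow> (\<Sum>j<i. b (n-1-j) - b (n-1-i)) \<le> real i * C"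
    "t < n"
  shows "(\<Sum>j<n. if a t + b t < a j + b j then a j + b j - (a t + b t) - C else 0) \<le> 0"
proof -
  have U: "(\<Sum>j<t. if a t + b t < a j + b j then a j + b j - (a t + b t) - C else 0) \<le> 0"
    by (rule ulem) (use assms in auto)
  have V: "(\<Sum>j\<in>{t<..<n}. if a t + b t < a j + b j then a j + b j - (a t + b t) - C else 0) \<le> 0"
    by (rule vlem) (use assms in auto)
  have split: "{..<n} = insert t ({..<t} \<union> {t<..<n})" using assms(5) by auto
  show ?thesis using U V by (subst sum_split3[OF assms(5)]) simp
qed



definition exc :: "real \<Rightarrow> real \<Rightarrow> real list \<Rightarrow> real" where
  "exc C y xs = sum_list (map (\<lambda>x. if y < x then x - y - C else 0) xs)"

lemma sum_list_map_image: "sum_list (map f xs) = sum_mset (image_mset f (mset xs))"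
  by (induction xs) auto

lemma exc_mset: "mset xs = mset ys \<Longrightarrow> exc C y xs = exc C y ys"
  unfolding exc_def by (simp only: sum_list_map_image)

lemma exc_append: "exc C y (xs @ ys) = exc C y xs + exc C y ys"
  unfolding exc_def by simp

lemma exc_nth: "exc C y xs = (\<Sum>j<length xs. if y < xs!j then xs!j - y - C else 0)"
  unfolding exc_def by (simp add: sum_list_sum_nth atLeast0LessThan)

lemma div_conv:
  fixes S z C r :: real
  assumes "0 < r"
  shows "S / r - z \<le> C \<longleftrightarrow> S \<le> r * (z + C)"
proof -
  have "S / r - z \<le> C \<longleftrightarrow> S / r \<le> z + C" by linarith
  also have "\<dots> \<longleftrightarrow> S \<le> (z + C) * r" using assms by (rule pos_divide_le_eq)
  also have "\<dots> \<longleftrightarrow> S \<le> r * (z + C)" by (simp add: mult.commute)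
  finally show ?thesis .
qed

lemma sorted_ge_nth:
  assumes "sorted_wrt (\<lambda>x y. y \<le> x) (ps :: real list)" "j \<le> k" "k < length ps"
  shows "ps!k \<le> ps!j"
proof (cases "j = k")
  case False
  then show ?thesis using sorted_wrt_nth_less[OF assms(1), of j k] assms by simp
qed simp

lemma sum_split_at:
  fixes f :: "nat \<Rightarrow> real"
  assumes "i \<le> n"
  shows "sum f {..<n} = sum f {..<i} + sum f {i..<n}"
  using sum.atLeastLessThan_concat[of 0 i n f] assms by (simp add: atLeast0LessThan)

lemma bal_of_exc:
  fixes ps :: "real list"
  assumes srt: "sorted_wrt (\<lambda>x y. y \<le> x) ps" and "C \<ge> 0" and ex: "exc C (ps!i) ps \<le> 0"
    and i: "1 \<le> i" "i < length ps"
  shows "(\<Sum>j<i. ps!j) / real i - ps!i \<le> C"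
proof -
  let ?y = "ps!i"
  let ?h = "\<lambda>j. if ?y < ps!j then ps!j - ?y - C else 0"
  have "exc C ?y ps = sum ?h {..<i} + sum ?h {i..<length ps}"
    unfolding exc_nth by (rule sum_split_at) (use i in simp)
  moreover have "sum ?h {i..<length ps} = 0"
    by (rule sum.neutral) (use sorted_ge_nth[OF srt] in force)
  moreover have "(\<Sum>j<i. ps!j - ?y - C) \<le> sum ?h {..<i}"
  proof (rule sum_mono)
    fix j assume "j \<in> {..<i}"
    then have "?y \<le> ps!j" using sorted_ge_nth[OF srt, of j i] i by simp
    then show "ps!j - ?y - C \<le> ?h j" using \<open>C \<ge> 0\<close> by auto
  qed
  ultimately have "(\<Sum>j<i. ps!j - ?y - C) \<le> 0" using ex by simp
  then have "(\<Sum>j<i. ps!j) \<le> real i * (?y + C)" by (simp add: sum_subtractf algebra_simps)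
  then show ?thesis using div_conv[of "real i"] i by simp
qed

lemma exc_of_bal:
  fixes ps :: "real list"
  assumes srt: "sorted_wrt (\<lambda>x y. y \<le> x) ps"
    and bal: "\<And>i. 1 \<le> i \<Longrightarrow> i < length ps \<Longrightarrow> (\<Sum>j<i. ps!j) / real i - ps!i \<le> C"
    and sm: "sum_list ps \<le> real (length ps) * C" and y: "y \<ge> 0"
  shows "exc C y ps \<le> 0"
proof (cases "\<forall>j<length ps. y < ps!j")
  case True
  have "exc C y ps = (\<Sum>j<length ps. ps!j - y - C)"
    unfolding exc_nth using True by (intro sum.cong) auto
  also have "\<dots> = sum_list ps - real (length ps) * y - real (length ps) * C"
    by (simp add: sum_subtractf sum_list_sum_nth atLeast0LessThan)
  also have "\<dots> \<le> 0" using sm y mult_nonneg_nonneg[of "real (length ps)" y] by linarith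
  finally show ?thesis .
next
  case False
  define i where "i = (LEAST j. j < length ps \<and> ps!j \<le> y)"
  have ex: "\<exists>j. j < length ps \<and> ps!j \<le> y" using False by auto
  have i1: "i < length ps \<and> ps!i \<le> y" unfolding i_def by (rule LeastI_ex[OF ex])
  have i2: "y < ps!j" if "j < i" for j
  proof (rule ccontr)
    assume "\<not> y < ps!j"
    then have "i \<le> j" unfolding i_def using that i1 by (intro Least_le) simp
    then show False using that by simp
  qed
  let ?h = "\<lambda>j. if y < ps!j then ps!j - y - C else 0"
  have "exc C y ps = sum ?h {..<i} + sum ?h {i..<length ps}"
    unfolding exc_nth by (rule sum_split_at) (use i1 in simp)
  moreover have "sum ?h {i..<length ps} = 0"
  proof (rule sum.neutral, intro ballI)
    fix j assume "j \<in> {i..<length ps}"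
    then have "ps!j \<le> ps!i" using sorted_ge_nth[OF srt] by simp
    then show "?h j = 0" using i1 by simp
  qed
  moreover have "sum ?h {..<i} = (\<Sum>j<i. ps!j - y - C)" using i2 by (intro sum.cong) auto
  moreover have "(\<Sum>j<i. ps!j - y - C) \<le> 0"
  proof (cases "i = 0")
    case False
    have "(\<Sum>j<i. ps!j) / real i - ps!i \<le> C" using bal[of i] False i1 by simp
    then have "(\<Sum>j<i. ps!j) \<le> real i * (ps!i + C)" using False div_conv[of "real i"] by simp
    moreover have "(\<Sum>j<i. ps!j - y - C) = (\<Sum>j<i. ps!j) - real i * y - real i * C"
      by (simp add: sum_subtractf)
    moreover have "real i * ps!i \<le> real i * y" using i1 by (intro mult_left_mono) auto
    ultimately show ?thesis by (simp add: algebra_simps)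
  qed simp
  ultimately show ?thesis by simp
qed



lemma sum_list_map_mset: "mset xs = mset ys \<Longrightarrow> sum_list (map f xs) = sum_list (map (f :: _ \<Rightarrow> real) ys)"
  by (simp only: sum_list_map_image)

lemma sum_list_le_len: "(\<And>x. x \<in> set xs \<Longrightarrow> f x \<le> M) \<Longrightarrow> sum_list (map f xs) \<le> real (length xs) * (M :: real)"
proof (induction xs)
  case (Cons x xs)
  then have h1: "f x \<le> M" and h2: "sum_list (map f xs) \<le> real (length xs) * M" by auto
  have e: "real (length (x # xs)) * M = M + real (length xs) * M" by (simp add: algebra_simps)
  show ?case unfolding e using h1 h2 by simp
qed simp

lemma length_filter_or:
  "(\<forall>x\<in>set xs. \<not> (P1 x \<and> P2 x)) \<Longrightarrow>
   length (filter (\<lambda>x. P1 x \<or> P2 x) xs) = length (filter P1 xs) + length (filter P2 xs)"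
  by (induction xs) auto

lemma filter_touch_all:
  "(\<And>p. p \<in> set Ps \<Longrightarrow> set p \<subseteq> set (arcs T) \<and> p \<noteq> []) \<Longrightarrow>
   filter (\<lambda>p. set p \<inter> set (arcs T) \<noteq> {}) Ps = Ps"
  by (rule filter_True) (metis inf.absorb_iff1 set_empty)

lemma theta_le:
  "theta \<tau> Pstar T \<le> real (npaths Pstar T) * Cmax \<tau> Pstar T"
proof -
  have "theta \<tau> Pstar T = sum_list (map (\<lambda>p. plen \<tau> p T) (filter (\<lambda>p. set p \<inter> set (arcs T) \<noteq> {}) Pstar))"
    unfolding theta_def by (rule sum_list_map_filter[symmetric]) (auto intro: plen_zero)
  also have "\<dots> \<le> real (npaths Pstar T) * Cmax \<tau> Pstar T"
    unfolding npaths_def by (rule sum_list_le_len) (auto intro: Cmax_ge)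
  finally show ?thesis .
qed

lemma sorted_rev_sort: "sorted_wrt (\<lambda>x y. y \<le> x) (rev (sort (xs :: real list)))"
  by (simp add: sorted_wrt_rev)

lemma side_exc:
  assumes tau: "\<forall>a. \<tau> a \<ge> 0" and st: "\<forall>p\<in>set Q. stpath T p"
    and con: "consistent \<tau> Q Pstar T" and bal: "balanced \<tau> Q Pstar T"
    and CC: "Cmax \<tau> Pstar T \<le> C" and y: "y \<ge> 0"
  shows "exc C y (map (\<lambda>p. plen \<tau> p T) Q) \<le> 0"
proof -
  have ft: "filter (\<lambda>p. set p \<inter> set (arcs T) \<noteq> {}) Q = Q"
    by (rule filter_touch_all) (use st stpath_subset stpath_nonempty in blast)
  define L where "L = map (\<lambda>p. plen \<tau> p T) Q"
  define ps where "ps = rev (sort L)"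
  have lps: "length ps = length Q" by (simp add: ps_def L_def)
  have bal': "\<And>i. 1 \<le> i \<Longrightarrow> i < length ps \<Longrightarrow> (\<Sum>j<i. ps!j) / real i - ps!i \<le> C"
  proof -
    fix i assume "1 \<le> i" "i < length ps"
    then have "(\<Sum>j<i. ps!j) / real i - ps!i \<le> Cmax \<tau> Pstar T"
      using bal unfolding balanced_def Let_def ft ps_def L_def by auto
    then show "(\<Sum>j<i. ps!j) / real i - ps!i \<le> C" using CC by simp
  qed
  have "sum_list ps = sum_list L" unfolding ps_def by (simp add: sum_mset_sum_list[symmetric])
  also have "\<dots> = theta \<tau> Q T" by (simp add: L_def theta_def)
  also have "\<dots> \<le> theta \<tau> Pstar T" using con unfolding consistent_def by simp
  also have "\<dots> \<le> real (npaths Pstar T) * Cmax \<tau> Pstar T" by (rule theta_le)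
  also have "npaths Pstar T = length Q" using con ft unfolding consistent_def npaths_def by simp
  also have "real (length Q) * Cmax \<tau> Pstar T \<le> real (length ps) * C"
    using CC lps by (simp add: mult_left_mono)
  finally have sm: "sum_list ps \<le> real (length ps) * C" .
  have "exc C y ps \<le> 0"
    by (rule exc_of_bal[OF sorted_rev_sort[of L, folded ps_def] bal' sm y])
  moreover have "mset ps = mset L" by (simp add: ps_def)
  ultimately show ?thesis using exc_mset L_def by metis
qed



lemma bal_conv:
  assumes "1 \<le> i" "(\<Sum>j<i. f j) / real i - z \<le> (C::real)"
  shows "(\<Sum>j<i. f j - z) \<le> real i * C"
proof -
  have "(\<Sum>j<i. f j) \<le> real i * (z + C)" using assms div_conv[of "real i"] by simp
  then show ?thesis by (simp add: sum_subtractf algebra_simps)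
qed

theorem lemma7:
  fixes \<tau> :: "'a \<Rightarrow> real" and D T1 T2 :: "'a sptree" and c :: sptype
    and k :: nat and Pstar Q R Ps :: "'a list list"
  assumes "wf_tree D"
    and "\<forall>a. \<tau> a \<ge> 0"
    and "optimal_profile \<tau> D k Pstar"
    and "subtree (Node c T1 T2) D"
    and "path_profile T1 Q" and "consistent \<tau> Q Pstar T1" and "balanced \<tau> Q Pstar T1"
    and "path_profile T2 R" and "consistent \<tau> R Pstar T2" and "balanced \<tau> R Pstar T2"
    and "greedy_comp \<tau> c T1 T2 Q R Ps"
  shows "path_profile (Node c T1 T2) Ps \<and> consistent \<tau> Ps Pstar (Node c T1 T2)
         \<and> balanced \<tau> Ps Pstar (Node c T1 T2)"
proof -
  let ?N = "Node c T1 T2"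
  have dD: "distinct (arcs D)" using assms(1) unfolding wf_tree_def .
  have dN: "distinct (arcs ?N)" by (rule subtree_distinct[OF assms(4) dD])
  have dis: "set (arcs T1) \<inter> set (arcs T2) = {}" using dN by simp
  have PD: "\<And>p. p \<in> set Pstar \<Longrightarrow> stpath D p"
    using assms(3) unfolding optimal_profile_def path_profile_def by blast
  have tau: "\<forall>a. \<tau> a \<ge> 0" by (rule assms(2))
  define C where "C = Cmax \<tau> Pstar ?N"
  have C0: "C \<ge> 0" unfolding C_def by (rule Cmax_nonneg)
  have plenN: "\<And>p. plen \<tau> p ?N = plen \<tau> p T1 + plen \<tau> p T2" by (rule plen_split[OF dis])
  have C1: "Cmax \<tau> Pstar T1 \<le> C" unfolding C_def
    by (rule Cmax_mono) (use plenN plen_nonneg[OF tau] in simp)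
  have C2: "Cmax \<tau> Pstar T2 \<le> C" unfolding C_def
    by (rule Cmax_mono) (use plenN plen_nonneg[OF tau] in simp)
  have Qst: "\<forall>p\<in>set Q. stpath T1 p" using assms(5) unfolding path_profile_def by blast
  have Rst: "\<forall>p\<in>set R. stpath T2 p" using assms(8) unfolding path_profile_def by blast
  have Qsub: "\<And>p. p \<in> set Q \<Longrightarrow> set p \<subseteq> set (arcs T1) \<and> p \<noteq> []"
    using Qst stpath_subset stpath_nonempty by blast
  have Rsub: "\<And>p. p \<in> set R \<Longrightarrow> set p \<subseteq> set (arcs T2) \<and> p \<noteq> []"
    using Rst stpath_subset stpath_nonempty by blast
  have plen1: "plen \<tau> p ?N = plen \<tau> p T1" if "set p \<subseteq> set (arcs T1)" for p
  proof -
    have "set p \<inter> set (arcs T2) = {}" using that dis by blast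
    then show ?thesis using plenN[of p] plen_zero[of p T2 \<tau>] by simp
  qed
  have plen2: "plen \<tau> p ?N = plen \<tau> p T2" if "set p \<subseteq> set (arcs T2)" for p
  proof -
    have "set p \<inter> set (arcs T1) = {}" using that dis by blast
    then show ?thesis using plenN[of p] plen_zero[of p T1 \<tau>] by simp
  qed
  have ftQ: "filter (\<lambda>p. set p \<inter> set (arcs T1) \<noteq> {}) Q = Q" by (rule filter_touch_all) (use Qsub in blast)
  have ftR: "filter (\<lambda>p. set p \<inter> set (arcs T2) \<noteq> {}) R = R" by (rule filter_touch_all) (use Rsub in blast)
  have lenQ: "npaths Pstar T1 = length Q" using assms(6) ftQ unfolding consistent_def npaths_def by simp
  have lenR: "npaths Pstar T2 = length R" using assms(9) ftR unfolding consistent_def npaths_def by simp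
  have thQ: "theta \<tau> Q T1 \<le> theta \<tau> Pstar T1" using assms(6) unfolding consistent_def by simp
  have thR: "theta \<tau> R T2 \<le> theta \<tau> Pstar T2" using assms(9) unfolding consistent_def by simp
  have thN: "theta \<tau> Pstar ?N = theta \<tau> Pstar T1 + theta \<tau> Pstar T2"
    unfolding theta_def plenN by (simp add: sum_list_addf)
  have arcsN: "set (arcs ?N) = set (arcs T1) \<union> set (arcs T2)" by simp
  have restr: "stpath ?N (filter (\<lambda>a. a \<in> set (arcs ?N)) p)"
    if "p \<in> set Pstar" "set p \<inter> set (arcs ?N) \<noteq> {}" for p
  proof -
    have "filter (\<lambda>a. a \<in> set (arcs ?N)) p \<noteq> []" using that(2) by (auto simp: filter_empty_conv)
    then show ?thesis using restrict_path[OF assms(4) dD PD[OF that(1)]] by blast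
  qed
  show ?thesis
  proof (cases "c = S")
    case True
    obtain qs rs where lQR: "length Q = length R" and mq: "mset qs = mset Q" and mr: "mset rs = mset R"
      and sq: "sorted_wrt (\<lambda>p q. plen \<tau> p T1 \<ge> plen \<tau> q T1) qs"
      and sr: "sorted_wrt (\<lambda>p q. plen \<tau> p T2 \<le> plen \<tau> q T2) rs"
      and Ps: "Ps = map (\<lambda>(p, q). p @ q) (zip qs rs)"
      using assms(11) True unfolding greedy_comp_def by auto
    define n where "n = length Q"
    have lqs: "length qs = n" using mq n_def by (metis size_mset)
    have lrs: "length rs = n" using mr lQR n_def by (metis size_mset)
    have lPs: "length Ps = n" using Ps lqs lrs by simp
    have sqs: "set qs = set Q" using mq by (metis set_mset_mset)
    have srs: "set rs = set R" using mr by (metis set_mset_mset)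
    have dqs: "distinct qs" using mq profile_distinct[OF assms(5)] mset_eq_imp_distinct_iff by blast
    have drs: "distinct rs" using mr profile_distinct[OF assms(8)] mset_eq_imp_distinct_iff by blast
    have Psn: "\<And>j. j < n \<Longrightarrow> Ps!j = qs!j @ rs!j" using Ps lqs lrs by simp
    have qsub: "\<And>j. j < n \<Longrightarrow> set (qs!j) \<subseteq> set (arcs T1) \<and> qs!j \<noteq> [] \<and> qs!j \<in> set Q"
      using Qsub sqs lqs by (metis nth_mem)
    have rsub: "\<And>j. j < n \<Longrightarrow> set (rs!j) \<subseteq> set (arcs T2) \<and> rs!j \<noteq> [] \<and> rs!j \<in> set R"
      using Rsub srs lrs by (metis nth_mem)
    have setPs: "\<And>p. p \<in> set Ps \<Longrightarrow> \<exists>j<n. p = qs!j @ rs!j" using Psn lPs by (metis in_set_conv_nth)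
    have pp: "path_profile ?N Ps"
      unfolding path_profile_def
    proof (intro conjI ballI allI impI)
      fix p assume "p \<in> set Ps"
      then obtain j where "j < n" "p = qs!j @ rs!j" using setPs by blast
      then show "stpath ?N p" using True Qst Rst qsub rsub by (simp add: stpath.ser)
    next
      fix i j assume ij: "i < length Ps" "j < length Ps" "i \<noteq> j"
      have "qs!i \<noteq> qs!j" using dqs ij lqs lPs by (simp add: nth_eq_iff_index_eq)
      then have a: "set (qs!i) \<inter> set (qs!j) = {}" using profile_disj[OF assms(5)] qsub ij lPs by simp
      have "rs!i \<noteq> rs!j" using drs ij lrs lPs by (simp add: nth_eq_iff_index_eq)
      then have b: "set (rs!i) \<inter> set (rs!j) = {}" using profile_disj[OF assms(8)] rsub ij lPs by simp
      have c1: "set (qs!i) \<inter> set (rs!j) = {}" using qsub rsub ij lPs dis by blast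
      have c2: "set (rs!i) \<inter> set (qs!j) = {}" using qsub rsub ij lPs dis by blast
      show "set (Ps!i) \<inter> set (Ps!j) = {}" using a b c1 c2 Psn ij lPs by auto
    qed
    define a where "a = (\<lambda>j. plen \<tau> (qs!j) T1)"
    define b where "b = (\<lambda>j. plen \<tau> (rs!j) T2)"
    have mapN: "map (\<lambda>p. plen \<tau> p ?N) Ps = map (\<lambda>j. a j + b j) [0..<n]"
    proof (rule nth_equalityI)
      show "length (map (\<lambda>p. plen \<tau> p ?N) Ps) = length (map (\<lambda>j. a j + b j) [0..<n])" using lPs by simp
      fix j assume "j < length (map (\<lambda>p. plen \<tau> p ?N) Ps)"
      then have j: "j < n" using lPs by simp
      show "map (\<lambda>p. plen \<tau> p ?N) Ps ! j = map (\<lambda>j. a j + b j) [0..<n] ! j"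
      proof -
        have "plen \<tau> (qs!j @ rs!j) ?N = plen \<tau> (qs!j) ?N + plen \<tau> (rs!j) ?N" by (rule plen_append)
        also have "\<dots> = a j + b j" unfolding a_def b_def
          using plen1[of "qs!j"] plen2[of "rs!j"] qsub[OF j] rsub[OF j] by simp
        finally show ?thesis using j Psn[OF j] lPs by simp
      qed
    qed
    have ftN: "filter (\<lambda>p. set p \<inter> set (arcs ?N) \<noteq> {}) Ps = Ps"
      by (rule filter_touch_all) (use setPs qsub rsub in fastforce)
    have touch: "(set p \<inter> set (arcs ?N) \<noteq> {}) = (set p \<inter> set (arcs T1) \<noteq> {})" if "p \<in> set Pstar" for p
    proof
      assume h: "set p \<inter> set (arcs ?N) \<noteq> {}"
      have st: "stpath ?N (filter (\<lambda>a. a \<in> set (arcs ?N)) p)" by (rule restr[OF that h])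
      from st show "set p \<inter> set (arcs T1) \<noteq> {}"
      proof (cases rule: stpath.cases)
        case (ser r1 r2)
        have "r1 \<noteq> []" "set r1 \<subseteq> set (arcs T1)" using stpath_nonempty[OF ser(3)] stpath_subset[OF ser(3)] by auto
        moreover have "set r1 \<subseteq> set (filter (\<lambda>a. a \<in> set (arcs ?N)) p)" unfolding ser(2) by simp
        moreover have "set (filter (\<lambda>a. a \<in> set (arcs ?N)) p) \<subseteq> set p" by auto
        ultimately obtain x where "x \<in> set r1" "x \<in> set p" "x \<in> set (arcs T1)"
          by (metis ex_in_conv set_empty subset_iff)
        then show ?thesis by blast
      qed (use True in auto)
    next
      assume "set p \<inter> set (arcs T1) \<noteq> {}" then show "set p \<inter> set (arcs ?N) \<noteq> {}" by auto
    qed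
    have npN: "npaths Pstar ?N = npaths Pstar T1"
    proof -
      have "filter (\<lambda>p. set p \<inter> set (arcs ?N) \<noteq> {}) Pstar = filter (\<lambda>p. set p \<inter> set (arcs T1) \<noteq> {}) Pstar"
        by (rule filter_cong[OF HOL.refl]) (rule touch)
      then show ?thesis unfolding npaths_def by simp
    qed
    have npPs: "npaths Ps ?N = n" unfolding npaths_def ftN lPs ..
    have thA: "theta \<tau> Q T1 = (\<Sum>j<n. a j)"
    proof -
      have "theta \<tau> Q T1 = sum_list (map (\<lambda>p. plen \<tau> p T1) qs)" unfolding theta_def
        using sum_list_map_mset[OF mq] by simp
      also have "\<dots> = (\<Sum>j<n. a j)" unfolding a_def using lqs
        by (simp add: sum_list_sum_nth atLeast0LessThan)
      finally show ?thesis .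
    qed
    have thB: "theta \<tau> R T2 = (\<Sum>j<n. b j)"
    proof -
      have "theta \<tau> R T2 = sum_list (map (\<lambda>p. plen \<tau> p T2) rs)" unfolding theta_def
        using sum_list_map_mset[OF mr] by simp
      also have "\<dots> = (\<Sum>j<n. b j)" unfolding b_def using lrs
        by (simp add: sum_list_sum_nth atLeast0LessThan)
      finally show ?thesis .
    qed
    have thPs: "theta \<tau> Ps ?N = (\<Sum>j<n. a j) + (\<Sum>j<n. b j)"
      unfolding theta_def mapN by (simp add: sum_list_sum_nth atLeast0LessThan sum.distrib)
    have cons: "consistent \<tau> Ps Pstar ?N"
      unfolding consistent_def using npN npPs lenQ n_def thPs thA thB thQ thR thN by simp
    have amono: "a j \<le> a i" if "i \<le> j" "j < n" for i j
    proof (cases "i = j")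
      case False then show ?thesis using sorted_wrt_nth_less[OF sq, of i j] that lqs a_def by simp
    qed simp
    have bmono: "b i \<le> b j" if "i \<le> j" "j < n" for i j
    proof (cases "i = j")
      case False then show ?thesis using sorted_wrt_nth_less[OF sr, of i j] that lrs b_def by simp
    qed simp
    have sortA: "rev (sort (map (\<lambda>p. plen \<tau> p T1) Q)) = map (\<lambda>p. plen \<tau> p T1) qs"
    proof -
      have "sort (map (\<lambda>p. plen \<tau> p T1) Q) = rev (map (\<lambda>p. plen \<tau> p T1) qs)"
        by (rule properties_for_sort) (use mq sq in \<open>simp_all add: sorted_wrt_rev sorted_wrt_map mset_map\<close>)
      then show ?thesis by simp
    qed
    have sortB: "rev (sort (map (\<lambda>p. plen \<tau> p T2) R)) = rev (map (\<lambda>p. plen \<tau> p T2) rs)"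
    proof -
      have "sort (map (\<lambda>p. plen \<tau> p T2) R) = map (\<lambda>p. plen \<tau> p T2) rs"
        by (rule properties_for_sort) (use mr sr in \<open>simp_all add: sorted_wrt_map mset_map\<close>)
      then show ?thesis by simp
    qed
    have abal: "(\<Sum>j<i. a j - a i) \<le> real i * C" if "1 \<le> i" "i < n" for i
    proof -
      have "(\<Sum>j<i. a j) / real i - a i \<le> Cmax \<tau> Pstar T1"
        using assms(7) that unfolding balanced_def Let_def ftQ sortA
        by (auto simp: a_def lqs n_def)
      then show ?thesis using bal_conv[OF that(1)] C1 by (meson dual_order.trans order_refl diff_le_eq le_diff_eq)
    qed
    have bbal: "(\<Sum>j<i. b (n-1-j) - b (n-1-i)) \<le> real i * C" if "1 \<le> i" "i < n" for i
    proof -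
      have e: "\<And>j. j < n \<Longrightarrow> rev (map (\<lambda>p. plen \<tau> p T2) rs) ! j = b (n-1-j)"
        using lrs by (simp add: rev_nth b_def)
      have "(\<Sum>j<i. rev (map (\<lambda>p. plen \<tau> p T2) rs) ! j) / real i - rev (map (\<lambda>p. plen \<tau> p T2) rs) ! i
           \<le> Cmax \<tau> Pstar T2"
        using assms(10) that unfolding balanced_def Let_def ftR sortB by (auto simp: lrs n_def)
      moreover have "(\<Sum>j<i. rev (map (\<lambda>p. plen \<tau> p T2) rs) ! j) = (\<Sum>j<i. b (n-1-j))"
        using e that by (intro sum.cong) auto
      ultimately have "(\<Sum>j<i. b (n-1-j)) / real i - b (n-1-i) \<le> C" using e that C2 by simp
      then show ?thesis by (rule bal_conv[OF that(1)])
    qed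
    define ps where "ps = rev (sort (map (\<lambda>j. a j + b j) [0..<n]))"
    have bal: "balanced \<tau> Ps Pstar ?N"
      unfolding balanced_def Let_def ftN mapN C_def[symmetric] ps_def[symmetric]
    proof (intro allI impI)
      fix i assume i: "1 \<le> i \<and> i < length ps"
      have "ps!i \<in> set ps" using i by simp
      then have "ps!i \<in> set (map (\<lambda>j. a j + b j) [0..<n])" unfolding ps_def by simp
      then obtain t where t: "t < n" "ps!i = a t + b t" by auto
      have "exc C (ps!i) ps = exc C (ps!i) (map (\<lambda>j. a j + b j) [0..<n])"
        by (rule exc_mset) (simp add: ps_def)
      also have "\<dots> = (\<Sum>j<n. if a t + b t < a j + b j then a j + b j - (a t + b t) - C else 0)"
        unfolding exc_nth t(2) by (intro sum.cong) auto
      also have "\<dots> \<le> 0" by (rule series_exc[OF _ _ _ _ t(1)]) (use amono bmono abal bbal in auto)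
      finally have "exc C (ps!i) ps \<le> 0" .
      then show "(\<Sum>j<i. ps!j) / real i - ps!i \<le> C"
        using bal_of_exc[OF _ C0 _, of ps i] i sorted_rev_sort unfolding ps_def by blast
    qed
    show ?thesis using pp cons bal by blast
  next
    case False
    then have cP: "c = P" by (cases c) auto
    have Ps: "Ps = Q @ R" using assms(11) False unfolding greedy_comp_def by simp
    have QR: "set Q \<inter> set R = {}"
    proof (rule ccontr)
      assume "set Q \<inter> set R \<noteq> {}"
      then obtain p where "p \<in> set Q" "p \<in> set R" by blast
      then have "set p \<subseteq> set (arcs T1) \<inter> set (arcs T2)" "p \<noteq> []" using Qsub Rsub by blast+
      then show False using dis by simp
    qed
    have pp: "path_profile ?N Ps" unfolding Ps
    proof (rule profile_intro)
      show "\<forall>p\<in>set (Q @ R). stpath ?N p" using Qst Rst cP by (auto intro: stpath.par1 stpath.par2)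
      show "distinct (Q @ R)" using profile_distinct[OF assms(5)] profile_distinct[OF assms(8)] QR by simp
      fix p p' assume "p \<in> set (Q @ R)" "p' \<in> set (Q @ R)" "p \<noteq> p'"
      then consider "p \<in> set Q" "p' \<in> set Q" | "p \<in> set R" "p' \<in> set R"
        | "p \<in> set Q" "p' \<in> set R" | "p \<in> set R" "p' \<in> set Q" by auto
      then show "set p \<inter> set p' = {}"
      proof cases
        case 1 then show ?thesis using profile_disj[OF assms(5)] \<open>p \<noteq> p'\<close> by blast
      next
        case 2 then show ?thesis using profile_disj[OF assms(8)] \<open>p \<noteq> p'\<close> by blast
      next
        case 3
        then have "set p \<subseteq> set (arcs T1)" "set p' \<subseteq> set (arcs T2)" using Qsub Rsub by blast+
        then show ?thesis using dis by blast
      next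
        case 4
        then have "set p \<subseteq> set (arcs T2)" "set p' \<subseteq> set (arcs T1)" using Qsub Rsub by blast+
        then show ?thesis using dis by blast
      qed
    qed
    have ftN: "filter (\<lambda>p. set p \<inter> set (arcs ?N) \<noteq> {}) Ps = Ps"
      by (rule filter_touch_all) (use Ps Qsub Rsub in auto)
    have notboth: "\<not> (set p \<inter> set (arcs T1) \<noteq> {} \<and> set p \<inter> set (arcs T2) \<noteq> {})" if "p \<in> set Pstar" for p
    proof
      assume h: "set p \<inter> set (arcs T1) \<noteq> {} \<and> set p \<inter> set (arcs T2) \<noteq> {}"
      then have "set p \<inter> set (arcs ?N) \<noteq> {}" by auto
      then have st: "stpath ?N (filter (\<lambda>a. a \<in> set (arcs ?N)) p)" by (rule restr[OF that])
      from st show False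
      proof (cases rule: stpath.cases)
        case par1
        then have "set (filter (\<lambda>a. a \<in> set (arcs ?N)) p) \<subseteq> set (arcs T1)" using stpath_subset by blast
        then show False using h dis by auto
      next
        case par2
        then have "set (filter (\<lambda>a. a \<in> set (arcs ?N)) p) \<subseteq> set (arcs T2)" using stpath_subset by blast
        then show False using h dis by auto
      qed (use cP in auto)
    qed
    have npN: "npaths Pstar ?N = npaths Pstar T1 + npaths Pstar T2"
    proof -
      have "filter (\<lambda>p. set p \<inter> set (arcs ?N) \<noteq> {}) Pstar
          = filter (\<lambda>p. set p \<inter> set (arcs T1) \<noteq> {} \<or> set p \<inter> set (arcs T2) \<noteq> {}) Pstar"
        by (rule filter_cong) auto
      moreover have "length (filter (\<lambda>p. set p \<inter> set (arcs T1) \<noteq> {} \<or> set p \<inter> set (arcs T2) \<noteq> {}) Pstar)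
          = length (filter (\<lambda>p. set p \<inter> set (arcs T1) \<noteq> {}) Pstar)
            + length (filter (\<lambda>p. set p \<inter> set (arcs T2) \<noteq> {}) Pstar)"
        by (rule length_filter_or) (use notboth in blast)
      ultimately show ?thesis unfolding npaths_def by (simp only:)
    qed
    have npPs: "npaths Ps ?N = length Q + length R" using ftN Ps unfolding npaths_def by (simp only: length_append)
    have mQ: "map (\<lambda>p. plen \<tau> p ?N) Q = map (\<lambda>p. plen \<tau> p T1) Q" using plen1 Qsub by simp
    have mR: "map (\<lambda>p. plen \<tau> p ?N) R = map (\<lambda>p. plen \<tau> p T2) R" using plen2 Rsub by simp
    have thPs: "theta \<tau> Ps ?N = theta \<tau> Q T1 + theta \<tau> R T2"
      by (simp only: theta_def Ps map_append sum_list_append mQ mR)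
    have cons: "consistent \<tau> Ps Pstar ?N"
      unfolding consistent_def using npN npPs lenQ lenR thPs thQ thR thN by simp
    define ps where "ps = rev (sort (map (\<lambda>p. plen \<tau> p T1) Q @ map (\<lambda>p. plen \<tau> p T2) R))"
    have bal: "balanced \<tau> Ps Pstar ?N"
      unfolding balanced_def Let_def ftN C_def[symmetric]
      unfolding Ps map_append mQ mR ps_def[symmetric]
    proof (intro allI impI)
      fix i assume i: "1 \<le> i \<and> i < length ps"
      have "ps!i \<in> set ps" using i by simp
      then have "ps!i \<in> set (map (\<lambda>p. plen \<tau> p T1) Q @ map (\<lambda>p. plen \<tau> p T2) R)" unfolding ps_def by simp
      then have y0: "ps!i \<ge> 0" using plen_nonneg[OF tau] by auto
      have "exc C (ps!i) ps = exc C (ps!i) (map (\<lambda>p. plen \<tau> p T1) Q @ map (\<lambda>p. plen \<tau> p T2) R)"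
        by (rule exc_mset) (simp add: ps_def)
      also have "\<dots> = exc C (ps!i) (map (\<lambda>p. plen \<tau> p T1) Q) + exc C (ps!i) (map (\<lambda>p. plen \<tau> p T2) R)"
        by (rule exc_append)
      also have "\<dots> \<le> 0"
        using side_exc[OF tau Qst assms(6) assms(7) C1 y0] side_exc[OF tau Rst assms(9) assms(10) C2 y0]
        by simp
      finally have "exc C (ps!i) ps \<le> 0" .
      then show "(\<Sum>j<i. ps!j) / real i - ps!i \<le> C"
        using bal_of_exc[OF _ C0 _, of ps i] i sorted_rev_sort unfolding ps_def by blast
    qed
    show ?thesis using pp cons bal by blast
  qed
qed

end
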